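(* Let $\mathcal{A}$ be a computably enumerable set of axioms (coded as natural numbers). Define $C\subseteq\omega$ by $$y\in C \iff \exists l\in\omega\ \exists \sigma\subseteq C\ \bigl[(l,\sigma,y)\in\mathcal{A}\bigr],$$ where $\sigma\subseteq C$ means that $\sigma$ agrees with the characteristic function of $C$ on $\mathrm{dom}\,\sigma$. Then $C$ is well defined and is $\mathrm{REA}[\omega]$.
   Context: Let $\langle x,y\rangle$ denote a standard computable pairing function; $\omega^{[<l]}=\{\langle m,y\rangle: m<l\}$ and $\omega^{[\ge l]}=\{\langle m,y\rangle: m\ge l\}$. An axiom is a triple $(l,\sigma,y)$ where $l\in\omega$, $\sigma$ is a function from a finite subset of $\omega^{[<l]}$ to $\{0,1\}$, and $y\in\omega^{[\ge l]}$. For $X\subseteq\omega$, $X^{[n]}=\{y:\langle n,y\rangle\in X\}$ and $X^{[<n]}=\{\langle m,y\rangle\in X:m<n\}$. $W_e^Z$ is the $e$-th set c.e. relative to $Z$. A set $C$ is $\mathrm{REA}[\omega]$ iff there is a computable function $f$ such that for every $n$, $C^{[n]}=W^{C^{[<n]}}_{f(n)}$. *)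

theory Defs
  imports Main "HOL-Library.Nat_Bijection"
begin

definition pair :: "nat \<Rightarrow> nat \<Rightarrow> nat" where
  "pair x y = prod_encode (x, y)"

text \<open>Unary partial recursive functions (multiple arguments coded by the pairing
  function), with an oracle query instruction returning the characteristic
  function of the oracle set.\<close>
datatype recf =
    Zero
  | Succ
  | Ident
  | Fst
  | Snd
  | Oracle
  | Comp recf recf
  | Pairf recf recf
  | Prim recf recf
  | Mu recf

inductive eval :: "nat set \<Rightarrow> recf \<Rightarrow> nat \<Rightarrow> nat \<Rightarrow> bool" for Z :: "nat set" where
  eval_Zero: "eval Z Zero x 0"
| eval_Succ: "eval Z Succ x (Suc x)"
| eval_Ident: "eval Z Ident x x"
| eval_Fst: "eval Z Fst x (fst (prod_decode x))"
| eval_Snd: "eval Z Snd x (snd (prod_decode x))"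
| eval_Oracle: "eval Z Oracle x (if x \<in> Z then 1 else 0)"
| eval_Comp: "eval Z g x w \<Longrightarrow> eval Z f w v \<Longrightarrow> eval Z (Comp f g) x v"
| eval_Pairf: "eval Z f x v \<Longrightarrow> eval Z g x w \<Longrightarrow> eval Z (Pairf f g) x (pair v w)"
| eval_Prim0: "eval Z f x v \<Longrightarrow> eval Z (Prim f g) (pair x 0) v"
| eval_PrimS: "eval Z (Prim f g) (pair x n) w \<Longrightarrow> eval Z g (pair x (pair n w)) v
                 \<Longrightarrow> eval Z (Prim f g) (pair x (Suc n)) v"
| eval_Mu: "eval Z f (pair x n) 0 \<Longrightarrow> (\<forall>m<n. \<exists>v. v > 0 \<and> eval Z f (pair x m) v)
                 \<Longrightarrow> eval Z (Mu f) x n"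

primrec code :: "recf \<Rightarrow> nat" where
  "code Zero = pair 0 0"
| "code Succ = pair 1 0"
| "code Ident = pair 2 0"
| "code Fst = pair 3 0"
| "code Snd = pair 4 0"
| "code Oracle = pair 5 0"
| "code (Comp f g) = pair 6 (pair (code f) (code g))"
| "code (Pairf f g) = pair 7 (pair (code f) (code g))"
| "code (Prim f g) = pair 8 (pair (code f) (code g))"
| "code (Mu f) = pair 9 (code f)"

text \<open>\<open>W e Z\<close>: the e-th set c.e. relative to Z (domain of the e-th Z-partial
  recursive function; non-codes index the empty set).\<close>
definition W :: "nat \<Rightarrow> nat set \<Rightarrow> nat set" where
  "W e Z = {y. \<exists>p v. code p = e \<and> eval Z p y v}"

definition computable :: "(nat \<Rightarrow> nat) \<Rightarrow> bool" where
  "computable f \<longleftrightarrow> (\<exists>p. \<forall>n. eval {} p n (f n))"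

definition ce :: "nat set \<Rightarrow> bool" where
  "ce A \<longleftrightarrow> (\<exists>e. A = W e {})"

definition column :: "nat set \<Rightarrow> nat \<Rightarrow> nat set" where
  "column X n = {y. pair n y \<in> X}"

definition below_cols :: "nat set \<Rightarrow> nat \<Rightarrow> nat set" where
  "below_cols X n = {z \<in> X. \<exists>m y. m < n \<and> z = pair m y}"

definition REA_omega :: "nat set \<Rightarrow> bool" where
  "REA_omega C \<longleftrightarrow> (\<exists>f. computable f \<and> (\<forall>n. column C n = W (f n) (below_cols C n)))"

text \<open>An axiom (l, \<sigma>, y): \<sigma> a finite partial function from \<omega>^[<l] to {0,1}
  (1 = True), y \<in> \<omega>^[\<ge>l].\<close>
definition is_axiom :: "nat \<times> (nat \<rightharpoonup> bool) \<times> nat \<Rightarrow> bool" where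
  "is_axiom a = (case a of (l, \<sigma>, y) \<Rightarrow>
     finite (dom \<sigma>) \<and> (\<forall>x\<in>dom \<sigma>. \<exists>m z. m < l \<and> x = pair m z)
     \<and> (\<exists>m z. m \<ge> l \<and> y = pair m z))"

definition code_fin :: "(nat \<rightharpoonup> bool) \<Rightarrow> nat" where
  "code_fin \<sigma> = set_encode {pair x (if b then 1 else 0) | x b. \<sigma> x = Some b}"

definition code_axiom :: "nat \<times> (nat \<rightharpoonup> bool) \<times> nat \<Rightarrow> nat" where
  "code_axiom a = (case a of (l, \<sigma>, y) \<Rightarrow> pair l (pair (code_fin \<sigma>) y))"

definition agrees :: "(nat \<rightharpoonup> bool) \<Rightarrow> nat set \<Rightarrow> bool" where
  "agrees \<sigma> C \<longleftrightarrow> (\<forall>x\<in>dom \<sigma>. \<sigma> x = Some (x \<in> C))"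

definition generated_by :: "(nat \<times> (nat \<rightharpoonup> bool) \<times> nat) set \<Rightarrow> nat set \<Rightarrow> bool" where
  "generated_by A C \<longleftrightarrow> (\<forall>y. y \<in> C \<longleftrightarrow> (\<exists>l \<sigma>. (l, \<sigma>, y) \<in> A \<and> agrees \<sigma> C))"

end

theory Submission
  imports Defs
begin


abbreviation p1 :: "nat \<Rightarrow> nat" where "p1 y \<equiv> fst (prod_decode y)"
abbreviation p2 :: "nat \<Rightarrow> nat" where "p2 y \<equiv> snd (prod_decode y)"

lemma p1_pair[simp]: "fst (prod_decode (pair a b)) = a" by (simp add: pair_def)
lemma p2_pair[simp]: "snd (prod_decode (pair a b)) = b" by (simp add: pair_def)
lemma pair_surj: "pair (p1 y) (p2 y) = y" by (simp add: pair_def)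
lemma pair_eq[simp]: "pair a b = pair c d \<longleftrightarrow> a = c \<and> b = d" by (simp add: pair_def)
lemma pair00[simp]: "pair 0 0 = 0" by (simp add: pair_def prod_encode_def)
lemma p1_0[simp]: "fst (prod_decode 0) = 0" using p1_pair[of 0 0] by simp
lemma p2_0[simp]: "snd (prod_decode 0) = 0" using p2_pair[of 0 0] by simp

definition computes :: "nat set \<Rightarrow> recf \<Rightarrow> (nat \<Rightarrow> nat) \<Rightarrow> bool" where
  "computes Z p F \<longleftrightarrow> (\<forall>y v. eval Z p y v \<longleftrightarrow> v = F y)"

inductive_cases evZero: "eval Z Zero y v"
inductive_cases evSucc: "eval Z Succ y v"
inductive_cases evIdent: "eval Z Ident y v"
inductive_cases evFst: "eval Z Fst y v"
inductive_cases evSnd: "eval Z Snd y v"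
inductive_cases evOracle: "eval Z Oracle y v"
inductive_cases evComp: "eval Z (Comp f g) y v"
inductive_cases evPairf: "eval Z (Pairf f g) y v"
inductive_cases evMu: "eval Z (Mu f) y v"

lemma comp_Zero: "computes Z Zero (\<lambda>_. 0)"
  unfolding computes_def by (auto elim: evZero intro: eval.intros)
lemma comp_Succ: "computes Z Succ Suc"
  unfolding computes_def by (auto elim: evSucc intro: eval.intros)
lemma comp_Ident: "computes Z Ident (\<lambda>y. y)"
  unfolding computes_def by (auto elim: evIdent intro: eval.intros)
lemma comp_Fst: "computes Z Fst p1"
  unfolding computes_def by (auto elim: evFst intro: eval.intros)
lemma comp_Snd: "computes Z Snd p2"
  unfolding computes_def by (auto elim: evSnd intro: eval.intros)
lemma comp_Oracle: "computes Z Oracle (\<lambda>y. if y \<in> Z then 1 else 0)"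
  unfolding computes_def
proof (intro allI iffI)
  fix y v assume "eval Z Oracle y v" then show "v = (if y \<in> Z then 1 else 0)" by (rule evOracle) simp
next
  fix y v :: nat assume "v = (if y \<in> Z then 1 else 0)" then show "eval Z Oracle y v" using eval_Oracle by simp
qed
lemma comp_Comp: "computes Z f F \<Longrightarrow> computes Z g G \<Longrightarrow> computes Z (Comp f g) (\<lambda>y. F (G y))"
  unfolding computes_def by (auto elim: evComp intro: eval.intros)
lemma comp_Pairf: "computes Z f F \<Longrightarrow> computes Z g G \<Longrightarrow> computes Z (Pairf f g) (\<lambda>y. pair (F y) (G y))"
  unfolding computes_def by (auto elim: evPairf intro: eval.intros)

primrec primh :: "(nat \<Rightarrow> nat) \<Rightarrow> (nat \<Rightarrow> nat) \<Rightarrow> nat \<Rightarrow> nat \<Rightarrow> nat" where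
  "primh F G x 0 = F x"
| "primh F G x (Suc n) = G (pair x (pair n (primh F G x n)))"

lemma comp_Prim: assumes f: "computes Z f F" and g: "computes Z g G"
  shows "computes Z (Prim f g) (\<lambda>y. primh F G (p1 y) (p2 y))"
proof -
  have fw: "eval Z (Prim f g) (pair x n) (primh F G x n)" for x n
    apply (induction n)
    using f g unfolding computes_def by (auto intro: eval.intros)
  have bw: "eval Z q y v \<Longrightarrow> q = Prim f g \<Longrightarrow> v = primh F G (p1 y) (p2 y)" for q y v
    apply (induction rule: eval.induct)
    using f g unfolding computes_def by auto
  show ?thesis unfolding computes_def
  proof (intro allI iffI)
    fix y v assume "eval Z (Prim f g) y v" then show "v = primh F G (p1 y) (p2 y)" using bw by blast
  next
    fix y v assume v: "v = primh F G (p1 y) (p2 y)"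
    have "eval Z (Prim f g) (pair (p1 y) (p2 y)) (primh F G (p1 y) (p2 y))" by (rule fw)
    then show "eval Z (Prim f g) y v" using v by (simp add: pair_surj)
  qed
qed

lemma comp_ext: "computes Z p F \<Longrightarrow> (\<And>y. F y = G y) \<Longrightarrow> computes Z p G"
  unfolding computes_def by auto

lemma comp_Mu_dom: assumes f: "computes Z f F"
  shows "(\<exists>v. eval Z (Mu f) x v) \<longleftrightarrow> (\<exists>n. F (pair x n) = 0)"
proof
  assume "\<exists>v. eval Z (Mu f) x v"
  then obtain v where "eval Z (Mu f) x v" by blast
  then have "eval Z f (pair x v) 0" using evMu by blast
  then show "\<exists>n. F (pair x n) = 0" using f unfolding computes_def by auto
next
  assume "\<exists>n. F (pair x n) = 0"
  define n where "n = (LEAST n. F (pair x n) = 0)"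
  have n: "F (pair x n) = 0" "\<forall>m<n. F (pair x m) \<noteq> 0"
    unfolding n_def using \<open>\<exists>n. F (pair x n) = 0\<close> by (auto intro: LeastI_ex dest: not_less_Least)
  have "eval Z (Mu f) x n"
    apply (rule eval_Mu)
    using n f unfolding computes_def by auto
  then show "\<exists>v. eval Z (Mu f) x v" by blast
qed

definition IFZ :: "recf \<Rightarrow> recf \<Rightarrow> recf \<Rightarrow> recf" where
  "IFZ a z b = Comp (Prim z (Comp b (Pairf Fst (Comp Fst Snd)))) (Pairf Ident a)"

lemma comp_IFZ: assumes "computes Z a A" "computes Z z Z0" "computes Z b B"
  shows "computes Z (IFZ a z b) (\<lambda>y. case A y of 0 \<Rightarrow> Z0 y | Suc k \<Rightarrow> B (pair y k))"
  unfolding IFZ_def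
  apply (rule comp_ext)
   apply (rule comp_Comp comp_Prim comp_Pairf assms comp_Fst comp_Snd comp_Ident)+
  apply (simp split: nat.split)
  done

primrec KON :: "nat \<Rightarrow> recf" where
  "KON 0 = Zero" | "KON (Suc n) = Comp Succ (KON n)"

lemma comp_KON: "computes Z (KON n) (\<lambda>_. n)"
  apply (induction n)
   apply (simp add: comp_Zero)
  apply simp
  apply (rule comp_ext, rule comp_Comp[OF comp_Succ], assumption, simp)
  done

lemmas comp_rules = comp_IFZ comp_KON comp_Comp comp_Pairf comp_Prim comp_Zero comp_Succ
  comp_Ident comp_Fst comp_Snd comp_Oracle



primrec sim :: "recf \<Rightarrow> nat \<Rightarrow> nat \<Rightarrow> nat" where
  "sim Zero x s = 1"
| "sim Succ x s = Suc (Suc x)"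
| "sim Ident x s = Suc x"
| "sim Fst x s = Suc (p1 x)"
| "sim Snd x s = Suc (p2 x)"
| "sim Oracle x s = 1"
| "sim (Comp f g) x s = (case sim g x s of 0 \<Rightarrow> 0 | Suc w \<Rightarrow> sim f w s)"
| "sim (Pairf f g) x s = (case sim f x s of 0 \<Rightarrow> 0 | Suc a \<Rightarrow>
      (case sim g x s of 0 \<Rightarrow> 0 | Suc b \<Rightarrow> Suc (pair a b)))"
| "sim (Prim f g) x s = primh (\<lambda>e. sim f (p1 e) (p2 e))
     (\<lambda>e. case p2 (p2 e) of 0 \<Rightarrow> 0 | Suc w \<Rightarrow> sim g (pair (p1 (p1 e)) (pair (p1 (p2 e)) w)) (p2 (p1 e)))
     (pair (p1 x) s) (p2 x)"
| "sim (Mu f) x s = (case primh (\<lambda>e. 0)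
     (\<lambda>e. case p2 (p2 e) of
           0 \<Rightarrow> (case sim f (pair (p1 (p1 e)) (p1 (p2 e))) (p2 (p1 e)) of
                  0 \<Rightarrow> 1 | Suc v \<Rightarrow> (case v of 0 \<Rightarrow> Suc (Suc (p1 (p2 e))) | Suc _ \<Rightarrow> 0))
         | Suc r' \<Rightarrow> Suc r')
     (pair x s) s of 0 \<Rightarrow> 0 | Suc r' \<Rightarrow> (case r' of 0 \<Rightarrow> 0 | Suc _ \<Rightarrow> r'))"

primrec scan :: "(nat \<Rightarrow> nat) \<Rightarrow> nat \<Rightarrow> nat" where
  "scan h 0 = 0"
| "scan h (Suc k) = (case scan h k of 0 \<Rightarrow> (case h k of 0 \<Rightarrow> 1 | Suc v \<Rightarrow> (case v of 0 \<Rightarrow> Suc (Suc k) | Suc _ \<Rightarrow> 0))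
     | Suc r \<Rightarrow> Suc r)"

lemma scan_zero: "scan h k = 0 \<longleftrightarrow> (\<forall>j<k. h j \<ge> 2)"
proof (induction k)
  case 0 then show ?case by simp
next
  case (Suc k) then show ?case
    by (auto split: nat.split simp: less_Suc_eq)
qed

lemma scan_found: "scan h k = Suc (Suc m) \<longleftrightarrow> (m < k \<and> h m = 1 \<and> (\<forall>j<m. h j \<ge> 2))"
proof (induction k)
  case 0 then show ?case by simp
next
  case (Suc k)
  show ?case
  proof (cases "scan h k")
    case 0
    then have "\<forall>j<k. h j \<ge> 2" using scan_zero by blast
    then show ?thesis using 0 Suc
      by (auto split: nat.split simp: less_Suc_eq)
  next
    case (Suc r)
    have e: "scan h (Suc k) = scan h k" using Suc by simp
    show ?thesis
    proof
      assume "scan h (Suc k) = Suc (Suc m)"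
      then show "m < Suc k \<and> h m = 1 \<and> (\<forall>j<m. h j \<ge> 2)" using e Suc.IH by auto
    next
      assume a: "m < Suc k \<and> h m = 1 \<and> (\<forall>j<m. h j \<ge> 2)"
      show "scan h (Suc k) = Suc (Suc m)"
      proof (cases "m < k")
        case True then show ?thesis using a e Suc.IH by auto
      next
        case False then have "m = k" using a by auto
        then have "scan h k = 0" using a scan_zero by auto
        then show ?thesis using Suc by simp
      qed
    qed
  qed
qed

lemma sim_Mu': "primh (\<lambda>e. 0)
     (\<lambda>e. case p2 (p2 e) of
           0 \<Rightarrow> (case sim f (pair (p1 (p1 e)) (p1 (p2 e))) (p2 (p1 e)) of
                  0 \<Rightarrow> 1 | Suc v \<Rightarrow> (case v of 0 \<Rightarrow> Suc (Suc (p1 (p2 e))) | Suc _ \<Rightarrow> 0))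
         | Suc r' \<Rightarrow> Suc r')
     (pair x s) k = scan (\<lambda>j. sim f (pair x j) s) k"
  by (induction k) (auto split: nat.split)

lemma sim_Mu: "sim (Mu f) x s = (case scan (\<lambda>j. sim f (pair x j) s) s of 0 \<Rightarrow> 0 | Suc r' \<Rightarrow> (case r' of 0 \<Rightarrow> 0 | Suc _ \<Rightarrow> r'))"
  by (simp only: sim.simps sim_Mu')

lemma sim_Mu_Suc: "sim (Mu f) x s = Suc v \<longleftrightarrow> scan (\<lambda>j. sim f (pair x j) s) s = Suc (Suc v)"
  unfolding sim_Mu by (auto split: nat.split)

definition simit :: "recf \<Rightarrow> recf \<Rightarrow> nat \<Rightarrow> nat \<Rightarrow> nat \<Rightarrow> nat" where
  "simit f g x0 s k = primh (\<lambda>e. sim f (p1 e) (p2 e))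
     (\<lambda>e. case p2 (p2 e) of 0 \<Rightarrow> 0 | Suc w \<Rightarrow> sim g (pair (p1 (p1 e)) (pair (p1 (p2 e)) w)) (p2 (p1 e)))
     (pair x0 s) k"

lemma simit_0[simp]: "simit f g x0 s 0 = sim f x0 s" by (simp add: simit_def)
lemma simit_Suc[simp]: "simit f g x0 s (Suc k) = (case simit f g x0 s k of 0 \<Rightarrow> 0 | Suc w \<Rightarrow> sim g (pair x0 (pair k w)) s)"
  by (simp add: simit_def split: nat.split)
lemma sim_Prim: "sim (Prim f g) x s = simit f g (p1 x) s (p2 x)" by (simp add: simit_def)

declare sim.simps(9,10)[simp del]

lemma sim_sound: "sim p x s = Suc v \<Longrightarrow> eval {} p x v"
proof (induction p arbitrary: x s v)
  case Zero then show ?case using eval_Zero[of "{}" x] by simp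
next
  case Succ then show ?case using eval_Succ[of "{}" x] by simp
next
  case Ident then show ?case using eval_Ident[of "{}" x] by simp
next
  case Fst then show ?case using eval_Fst[of "{}" x] by simp
next
  case Snd then show ?case using eval_Snd[of "{}" x] by simp
next
  case Oracle then show ?case using eval_Oracle[of "{}" x] by simp
next
  case (Comp f g)
  obtain w where w: "sim g x s = Suc w" "sim f w s = Suc v" using Comp.prems by (cases "sim g x s") auto
  show ?case by (rule eval_Comp[OF Comp.IH(2)[OF w(1)] Comp.IH(1)[OF w(2)]])
next
  case (Pairf f g)
  obtain a b where w: "sim f x s = Suc a" "sim g x s = Suc b" "v = pair a b" using Pairf.prems
    by (cases "sim f x s"; cases "sim g x s") auto
  show ?case unfolding w(3) by (rule eval_Pairf[OF Pairf.IH(1)[OF w(1)] Pairf.IH(2)[OF w(2)]])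
next
  case (Prim f g)
  have *: "simit f g x0 s k = Suc v \<Longrightarrow> eval {} (Prim f g) (pair x0 k) v" for x0 k v
  proof (induction k arbitrary: v)
    case 0 then show ?case using Prim.IH(1) eval_Prim0 by simp
  next
    case (Suc k)
    obtain w where w: "simit f g x0 s k = Suc w" "sim g (pair x0 (pair k w)) s = Suc v" using Suc.prems
      by (cases "simit f g x0 s k") auto
    show ?case by (rule eval_PrimS[OF Suc.IH[OF w(1)] Prim.IH(2)[OF w(2)]])
  qed
  have "eval {} (Prim f g) (pair (p1 x) (p2 x)) v" using *[of "p1 x" "p2 x" v] Prim.prems by (simp add: sim_Prim)
  then show ?case by (simp add: pair_surj)
next
  case (Mu f)
  let ?h = "\<lambda>j. sim f (pair x j) s"
  have "scan ?h s = Suc (Suc v)" using Mu.prems sim_Mu_Suc by blast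
  then have "v < s \<and> ?h v = 1 \<and> (\<forall>j<v. ?h j \<ge> 2)" by (rule iffD1[OF scan_found])
  then have h: "?h v = 1" "\<forall>j<v. ?h j \<ge> 2" by auto
  show ?case
  proof (rule eval_Mu)
    show "eval {} f (pair x v) 0" using h(1) Mu.IH by simp
    show "\<forall>m<v. \<exists>u>0. eval {} f (pair x m) u"
    proof (intro allI impI)
      fix m assume "m < v"
      then have "?h m = Suc (?h m - 1)" "?h m - 1 > 0" using h(2) by auto
      then show "\<exists>u>0. eval {} f (pair x m) u" using Mu.IH[of "pair x m" s "?h m - 1"]
        by (intro exI[of _ "?h m - 1"]) auto
    qed
  qed
qed

lemma sim_mono: "sim p x s = Suc v \<Longrightarrow> s \<le> s' \<Longrightarrow> sim p x s' = Suc v"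
proof (induction p arbitrary: x s v s')
  case (Comp f g)
  obtain w where w: "sim g x s = Suc w" "sim f w s = Suc v" using Comp.prems by (cases "sim g x s") auto
  have "sim g x s' = Suc w" "sim f w s' = Suc v"
    using Comp.IH(1)[OF w(2) Comp.prems(2)] Comp.IH(2)[OF w(1) Comp.prems(2)] by auto
  then show ?case by simp
next
  case (Pairf f g)
  obtain a b where w: "sim f x s = Suc a" "sim g x s = Suc b" "v = pair a b" using Pairf.prems
    by (cases "sim f x s"; cases "sim g x s") auto
  have "sim f x s' = Suc a" "sim g x s' = Suc b"
    using Pairf.IH(1)[OF w(1) Pairf.prems(2)] Pairf.IH(2)[OF w(2) Pairf.prems(2)] by auto
  then show ?case using w(3) by simp
next
  case (Prim f g)
  have *: "simit f g x0 s k = Suc v \<Longrightarrow> simit f g x0 s' k = Suc v" for x0 k v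
  proof (induction k arbitrary: v)
    case 0 then show ?case using Prim.IH(1)[of x0 s v s'] Prim.prems(2) by simp
  next
    case (Suc k)
    obtain w where w: "simit f g x0 s k = Suc w" "sim g (pair x0 (pair k w)) s = Suc v" using Suc.prems
      by (cases "simit f g x0 s k") auto
    have "simit f g x0 s' k = Suc w" "sim g (pair x0 (pair k w)) s' = Suc v"
      using Suc.IH[OF w(1)] Prim.IH(2)[OF w(2) Prim.prems(2)] by auto
    then show ?case by simp
  qed
  then show ?case using Prim.prems(1) by (simp add: sim_Prim)
next
  case (Mu f)
  let ?h = "\<lambda>j. sim f (pair x j) s"
  let ?h' = "\<lambda>j. sim f (pair x j) s'"
  have "scan ?h s = Suc (Suc v)" using Mu.prems sim_Mu_Suc by blast
  then have "v < s \<and> ?h v = 1 \<and> (\<forall>j<v. ?h j \<ge> 2)" by (rule iffD1[OF scan_found])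
  then have h: "v < s" "?h v = 1" "\<forall>j<v. ?h j \<ge> 2" by auto
  have "?h' v = 1" using h(2) Mu.IH[of "pair x v" s 0 s'] Mu.prems(2) by simp
  moreover have "\<forall>j<v. ?h' j \<ge> 2"
  proof (intro allI impI)
    fix j assume "j < v"
    then have "?h j = Suc (?h j - 1)" "?h j \<ge> 2" using h(3) by auto
    then have "?h' j = Suc (?h j - 1)" using Mu.IH[of "pair x j" s "?h j - 1" s'] Mu.prems(2) by simp
    then show "?h' j \<ge> 2" using \<open>?h j \<ge> 2\<close> by simp
  qed
  moreover have "v < s'" using h(1) Mu.prems(2) by simp
  ultimately have "v < s' \<and> ?h' v = 1 \<and> (\<forall>j<v. ?h' j \<ge> 2)" by blast
  then have "scan ?h' s' = Suc (Suc v)" by (rule iffD2[OF scan_found])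
  then show ?case using sim_Mu_Suc by blast
qed auto

lemma common_bound: "(\<forall>j<(k::nat). \<exists>s::nat. P j s) \<Longrightarrow> (\<And>j s s'. P j s \<Longrightarrow> s \<le> s' \<Longrightarrow> P j s') \<Longrightarrow> \<exists>s. \<forall>j<k. P j s"
proof (induction k)
  case 0 then show ?case by simp
next
  case (Suc k)
  then obtain s1 where s1: "\<forall>j<k. P j s1" by auto
  obtain s2 where s2: "P k s2" using Suc.prems(1) by auto
  have "\<forall>j<Suc k. P j (max s1 s2)"
  proof (intro allI impI)
    fix j assume "j < Suc k"
    then show "P j (max s1 s2)"
    proof (cases "j < k")
      case True then have "P j s1" using s1 by blast
      then show ?thesis by (rule Suc.prems(2)[OF _ max.cobounded1])
    next
      case False then have "j = k" using \<open>j < Suc k\<close> by simp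
      then show ?thesis using Suc.prems(2)[OF s2 max.cobounded2] by simp
    qed
  qed
  then show ?case by blast
qed

lemma sim_complete: "eval {} p x v \<Longrightarrow> \<exists>s. sim p x s = Suc v"
proof (induction rule: eval.induct)
  case (eval_Comp g x w f v)
  then obtain s1 s2 where a: "sim g x s1 = Suc w" "sim f w s2 = Suc v" by blast
  have "sim g x (max s1 s2) = Suc w" "sim f w (max s1 s2) = Suc v"
    using sim_mono[OF a(1), of "max s1 s2"] sim_mono[OF a(2), of "max s1 s2"] by auto
  then show ?case by (intro exI[of _ "max s1 s2"]) simp
next
  case (eval_Pairf f x v g w)
  then obtain s1 s2 where a: "sim f x s1 = Suc v" "sim g x s2 = Suc w" by blast
  have "sim f x (max s1 s2) = Suc v" "sim g x (max s1 s2) = Suc w"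
    using sim_mono[OF a(1), of "max s1 s2"] sim_mono[OF a(2), of "max s1 s2"] by auto
  then show ?case by (intro exI[of _ "max s1 s2"]) simp
next
  case (eval_Prim0 f x v g)
  then obtain s where "sim f x s = Suc v" by blast
  then show ?case by (intro exI[of _ s]) (simp add: sim_Prim)
next
  case (eval_PrimS f g x n w v)
  then obtain s1 s2 where a: "sim (Prim f g) (pair x n) s1 = Suc w" "sim g (pair x (pair n w)) s2 = Suc v" by blast
  have "sim (Prim f g) (pair x n) (max s1 s2) = Suc w" "sim g (pair x (pair n w)) (max s1 s2) = Suc v"
    using sim_mono[OF a(1), of "max s1 s2"] sim_mono[OF a(2), of "max s1 s2"] by auto
  then show ?case by (intro exI[of _ "max s1 s2"]) (simp add: sim_Prim)
next
  case (eval_Mu f x n)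
  from eval_Mu obtain s0 where s0: "sim f (pair x n) s0 = Suc 0" by blast
  from eval_Mu have "\<forall>m<n. \<exists>s. sim f (pair x m) s \<ge> 2"
    by (metis Suc_le_mono not0_implies_Suc numeral_2_eq_2 Suc_leI)
  then obtain s1 where s1: "\<forall>j<n. sim f (pair x j) s1 \<ge> 2"
  proof (atomize_elim, rule common_bound)
    fix j s s' assume "2 \<le> sim f (pair x j) s" "s \<le> s'"
    then show "2 \<le> sim f (pair x j) s'"
      using sim_mono[of f "pair x j" s "sim f (pair x j) s - 1" s'] by simp
  qed
  define s where "s = max (Suc n) (max s0 s1)"
  have "sim f (pair x n) s = Suc 0" using sim_mono[OF s0, of s] s_def by simp
  moreover have "\<forall>j<n. sim f (pair x j) s \<ge> 2"
  proof (intro allI impI)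
    fix j assume j: "j < n"
    have ge: "sim f (pair x j) s1 \<ge> 2" using s1 j by blast
    have eq: "sim f (pair x j) s1 = Suc (sim f (pair x j) s1 - 1)" using ge by simp
    have le: "s1 \<le> s" by (simp add: s_def)
    show "sim f (pair x j) s \<ge> 2" using sim_mono[OF eq le] ge by simp
  qed
  moreover have "n < s" unfolding s_def by simp
  ultimately have "n < s \<and> (\<lambda>j. sim f (pair x j) s) n = 1 \<and> (\<forall>j<n. (\<lambda>j. sim f (pair x j) s) j \<ge> 2)" by simp
  then have "scan (\<lambda>j. sim f (pair x j) s) s = Suc (Suc n)" by (rule iffD2[OF scan_found])
  then show ?case using sim_Mu_Suc by blast
qed (auto intro: exI[of _ 0])

lemma sim_iff: "(\<exists>v. eval {} p x v) \<longleftrightarrow> (\<exists>s. sim p x s \<noteq> 0)"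
proof
  assume "\<exists>v. eval {} p x v"
  then obtain v where "eval {} p x v" by blast
  then obtain s where "sim p x s = Suc v" using sim_complete by blast
  then show "\<exists>s. sim p x s \<noteq> 0" by (intro exI[of _ s]) simp
next
  assume "\<exists>s. sim p x s \<noteq> 0"
  then obtain s where "sim p x s \<noteq> 0" by blast
  then have "sim p x s = Suc (sim p x s - 1)" by simp
  then show "\<exists>v. eval {} p x v" using sim_sound by blast
qed



primrec simprog :: "recf \<Rightarrow> recf" where
  "simprog Zero = KON 1"
| "simprog Succ = Comp Succ (Comp Succ Fst)"
| "simprog Ident = Comp Succ Fst"
| "simprog Fst = Comp Succ (Comp Fst Fst)"
| "simprog Snd = Comp Succ (Comp Snd Fst)"
| "simprog Oracle = KON 1"
| "simprog (Comp f g) = IFZ (simprog g) Zero (Comp (simprog f) (Pairf Snd (Comp Snd Fst)))"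
| "simprog (Pairf f g) = IFZ (simprog f) Zero
     (IFZ (Comp (simprog g) Fst) Zero (Comp Succ (Pairf (Comp Snd Fst) Snd)))"
| "simprog (Prim f g) = Comp (Prim (simprog f)
      (IFZ (Comp Snd Snd) Zero
        (Comp (simprog g) (Pairf (Pairf (Comp Fst (Comp Fst Fst)) (Pairf (Comp Fst (Comp Snd Fst)) Snd))
                                 (Comp Snd (Comp Fst Fst))))))
    (Pairf (Pairf (Comp Fst Fst) Snd) (Comp Snd Fst))"
| "simprog (Mu f) = IFZ
     (Comp (Prim Zero
        (IFZ (Comp Snd Snd)
           (IFZ (Comp (simprog f) (Pairf (Pairf (Comp Fst Fst) (Comp Fst Snd)) (Comp Snd Fst)))
              (KON 1)
              (IFZ Snd (Comp Succ (Comp Succ (Comp Fst (Comp Snd Fst)))) Zero))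
           (Comp Succ Snd)))
      (Pairf Ident Snd))
     Zero (IFZ Snd Zero (Comp Snd Fst))"

lemma simprog_computes: "computes Z (simprog p) (\<lambda>y. sim p (p1 y) (p2 y))"
proof (induction p)
  case (Comp f g) show ?case
    apply simp apply (rule comp_ext)
     apply (rule comp_rules Comp.IH)+
    apply (simp split: nat.split)
    done
next
  case (Pairf f g) show ?case
    apply simp apply (rule comp_ext)
     apply (rule comp_rules Pairf.IH)+
    apply (simp split: nat.split)
    done
next
  case (Prim f g) show ?case
    apply simp apply (rule comp_ext)
     apply (rule comp_rules Prim.IH)+
    apply (simp add: sim.simps(9) cong: nat.case_cong)
    done
next
  case (Mu f) show ?case
    apply simp apply (rule comp_ext)
     apply (rule comp_rules Mu.IH)+
    apply (simp add: sim.simps(10) pair_surj cong: nat.case_cong)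
    done
qed (simp, rule comp_ext, (rule comp_rules)+, simp)+



definition PRED :: recf where "PRED = Comp (Prim Zero (Comp Fst Snd)) (Pairf Zero Ident)"
lemma comp_PRED: "computes Z PRED (\<lambda>y. y - 1)"
  unfolding PRED_def
  apply (rule comp_ext, (rule comp_rules)+)
  subgoal for y by (cases y) simp_all
  done

definition MONUS :: recf where "MONUS = Prim Ident (Comp PRED (Comp Snd Snd))"
lemma primh_monus: "primh (\<lambda>y. y) (\<lambda>e. p2 (p2 e) - Suc 0) a b = a - b"
  by (induction b) auto
lemma comp_MONUS: "computes Z MONUS (\<lambda>y. p1 y - p2 y)"
  unfolding MONUS_def
  apply (rule comp_ext, (rule comp_rules comp_PRED)+)
  apply (simp add: primh_monus)
  done

definition ABSD :: recf where "ABSD = IFZ MONUS (IFZ (Comp MONUS (Pairf Snd Fst)) Zero (KON 1)) (KON 1)"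
lemma comp_ABSD: "computes Z ABSD (\<lambda>y. if p1 y = p2 y then 0 else 1)"
  unfolding ABSD_def
  apply (rule comp_ext, (rule comp_rules comp_MONUS)+)
  apply (auto split: nat.split)
  done

definition HP :: recf where "HP = Comp (Prim Zero
   (IFZ (Comp Snd (Comp Snd Snd)) (Pairf (Comp Fst (Comp Snd Snd)) (KON 1))
        (Pairf (Comp Succ (Comp Fst (Comp Snd (Comp Snd Fst)))) Zero))) (Pairf Zero Ident)"

lemma comp_HP: "computes Z HP (\<lambda>n. pair (n div 2) (n mod 2))"
  unfolding HP_def
  apply (rule comp_ext, (rule comp_rules)+)
  apply simp
  subgoal for y
    apply (induction y)
     apply simp
    apply (simp cong: nat.case_cong split: nat.split)
    apply presburger
    done
  done

definition DIVPOW :: recf where "DIVPOW = Prim Ident (Comp (Comp Fst HP) (Comp Snd Snd))"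
lemma primh_divpow: "primh (\<lambda>y. y) (\<lambda>e. p2 (p2 e) div 2) c k = c div 2 ^ k"
  by (induction k) (simp_all del: power_Suc add: power_Suc2 div_mult2_eq)
lemma comp_DIVPOW: "computes Z DIVPOW (\<lambda>y. p1 y div 2 ^ p2 y)"
  unfolding DIVPOW_def
  apply (rule comp_ext, (rule comp_rules comp_HP)+)
  apply (simp add: primh_divpow)
  done

definition BIT :: recf where "BIT = Comp Snd (Comp HP DIVPOW)"
lemma comp_BIT: "computes Z BIT (\<lambda>y. p1 y div 2 ^ p2 y mod 2)"
  unfolding BIT_def
  apply (rule comp_ext, (rule comp_rules comp_HP comp_DIVPOW)+)
  apply simp
  done

definition bad :: "nat set \<Rightarrow> nat \<Rightarrow> nat \<Rightarrow> nat" where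
  "bad Z c k = (if c div 2 ^ k mod 2 = 0 then 0 else (if p2 k = (if p1 k \<in> Z then 1 else 0) then 0 else 1))"

definition BAD :: recf where "BAD = IFZ (Comp BIT (Pairf Fst (Comp Fst Snd))) Zero
   (Comp ABSD (Pairf (Comp Snd (Comp Fst (Comp Snd Fst))) (Comp Oracle (Comp Fst (Comp Fst (Comp Snd Fst))))))"
lemma comp_BAD: "computes Z BAD (\<lambda>e. bad Z (p1 e) (p1 (p2 e)))"
  unfolding BAD_def
  apply (rule comp_ext, (rule comp_rules comp_BIT comp_ABSD)+)
  apply (auto simp: bad_def split: nat.split)
  done

definition disc :: "nat set \<Rightarrow> nat \<Rightarrow> nat" where
  "disc Z c = primh (\<lambda>_. 0) (\<lambda>e. case p2 (p2 e) of 0 \<Rightarrow> bad Z (p1 e) (p1 (p2 e)) | Suc a \<Rightarrow> Suc a) c c"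

lemma disc_acc: "primh (\<lambda>_. 0) (\<lambda>e. case p2 (p2 e) of 0 \<Rightarrow> bad Z (p1 e) (p1 (p2 e)) | Suc a \<Rightarrow> Suc a) c k = 0
   \<longleftrightarrow> (\<forall>j<k. bad Z c j = 0)"
  by (induction k) (auto split: nat.split simp: less_Suc_eq)

lemma disc_zero: "disc Z c = 0 \<longleftrightarrow> (\<forall>j<c. bad Z c j = 0)"
  unfolding disc_def by (rule disc_acc)

definition DISC :: recf where "DISC = Comp (Prim Zero (IFZ (Comp Snd Snd) BAD (Comp Succ Snd))) (Pairf Ident Ident)"
lemma comp_DISC: "computes Z DISC (disc Z)"
  unfolding DISC_def disc_def
  apply (rule comp_ext, (rule comp_rules comp_BAD)+)
  apply (simp cong: nat.case_cong)
  done



lemma pair_eq0[simp]: "pair a b = 0 \<longleftrightarrow> a = 0 \<and> b = 0"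
  using pair_eq[of a b 0 0] by simp

lemma code_inj: "code p = code q \<Longrightarrow> p = q"
proof (induction p arbitrary: q)
qed (case_tac q; simp)+

definition TP :: "recf \<Rightarrow> recf" where
  "TP P = IFZ (Comp (simprog P) (Pairf (Comp Fst Snd) (Comp Snd Snd))) (KON 1)
        (Comp (IFZ (Comp ABSD (Pairf (Comp Snd (Comp Snd (Comp Fst Snd))) Fst))
                   (Comp DISC (Comp Fst (Comp Snd (Comp Fst Snd)))) (KON 1)) Fst)"

definition Tf :: "nat set \<Rightarrow> recf \<Rightarrow> nat \<Rightarrow> nat" where
  "Tf Z P e = (if sim P (p1 (p2 e)) (p2 (p2 e)) = 0 then 1
     else if p2 (p2 (p1 (p2 e))) = p1 e then disc Z (p1 (p2 (p1 (p2 e)))) else 1)"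

lemma comp_TP: "computes Z (TP P) (Tf Z P)"
  unfolding TP_def
  apply (rule comp_ext, (rule comp_rules comp_ABSD comp_DISC simprog_computes)+)
  apply (auto simp: Tf_def split: nat.split)
  done

lemma mu_dom: "(\<exists>v. eval Z (Mu (TP P)) w v) \<longleftrightarrow>
   (\<exists>x s. sim P x s \<noteq> 0 \<and> p2 (p2 x) = w \<and> disc Z (p1 (p2 x)) = 0)"
proof -
  have "(\<exists>v. eval Z (Mu (TP P)) w v) \<longleftrightarrow> (\<exists>t. Tf Z P (pair w t) = 0)"
    by (rule comp_Mu_dom[OF comp_TP])
  also have "\<dots> \<longleftrightarrow> (\<exists>x s. sim P x s \<noteq> 0 \<and> p2 (p2 x) = w \<and> disc Z (p1 (p2 x)) = 0)"
  proof
    assume "\<exists>t. Tf Z P (pair w t) = 0"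
    then obtain t where "Tf Z P (pair w t) = 0" by blast
    then show "\<exists>x s. sim P x s \<noteq> 0 \<and> p2 (p2 x) = w \<and> disc Z (p1 (p2 x)) = 0"
      by (auto simp: Tf_def split: if_splits)
  next
    assume "\<exists>x s. sim P x s \<noteq> 0 \<and> p2 (p2 x) = w \<and> disc Z (p1 (p2 x)) = 0"
    then obtain x s where "sim P x s \<noteq> 0 \<and> p2 (p2 x) = w \<and> disc Z (p1 (p2 x)) = 0" by blast
    then have "Tf Z P (pair w (pair x s)) = 0" by (simp add: Tf_def)
    then show "\<exists>t. Tf Z P (pair w t) = 0" by blast
  qed
  finally show ?thesis .
qed

definition pn :: "recf \<Rightarrow> nat \<Rightarrow> recf" where
  "pn P n = Comp (Mu (TP P)) (Pairf (KON n) Ident)"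

lemma pn_dom: "(\<exists>v. eval Z (pn P n) z v) \<longleftrightarrow> (\<exists>v. eval Z (Mu (TP P)) (pair n z) v)"
proof -
  have c: "computes Z (Pairf (KON n) Ident) (\<lambda>z. pair n z)"
    by (rule comp_ext, (rule comp_rules)+, simp)
  show ?thesis
  proof
    assume "\<exists>v. eval Z (pn P n) z v"
    then obtain v where "eval Z (pn P n) z v" by blast
    then obtain w where "eval Z (Pairf (KON n) Ident) z w" "eval Z (Mu (TP P)) w v"
      unfolding pn_def by (rule evComp)
    then show "\<exists>v. eval Z (Mu (TP P)) (pair n z) v" using c unfolding computes_def by auto
  next
    assume "\<exists>v. eval Z (Mu (TP P)) (pair n z) v"
    then obtain v where v: "eval Z (Mu (TP P)) (pair n z) v" by blast
    have "eval Z (Pairf (KON n) Ident) z (pair n z)" using c unfolding computes_def by auto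
    then show "\<exists>v. eval Z (pn P n) z v" unfolding pn_def using v eval_Comp by blast
  qed
qed

definition CC :: recf where
  "CC = Comp (Prim Zero (Pairf (KON 6) (Pairf (KON (pair 1 0)) (Comp Snd Snd)))) (Pairf Zero Ident)"

lemma comp_CC: "computes Z CC (\<lambda>n. code (KON n))"
  unfolding CC_def
  apply (rule comp_ext, (rule comp_rules)+)
  apply simp
  subgoal for y by (induction y) simp_all
  done

lemma pn_computable: "computable (\<lambda>n. code (pn P n))"
proof -
  have "computes {} (Pairf (KON 6) (Pairf (KON (code (Mu (TP P)))) (Pairf (KON 7) (Pairf CC (KON (code Ident))))))
     (\<lambda>n. code (pn P n))"
    by (rule comp_ext, (rule comp_rules comp_CC)+) (simp add: pn_def)
  then show ?thesis unfolding computable_def computes_def by blast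
qed



lemma set_decode_less: "j \<in> set_decode c \<Longrightarrow> j < c"
proof -
  assume "j \<in> set_decode c"
  then have "odd (c div 2 ^ j)" by (simp add: set_decode_def)
  then have "0 < c div 2 ^ j" by (rule odd_pos)
  then have "c div 2 ^ j \<noteq> 0" by simp
  then have "2 ^ j \<le> c" by (simp add: div_eq_0_iff)
  moreover have "j < 2 ^ j" by (rule less_exp)
  ultimately show "j < c" by linarith
qed

lemma disc_agrees: assumes fin: "finite (dom \<sigma>)"
  shows "disc Z (code_fin \<sigma>) = 0 \<longleftrightarrow> agrees \<sigma> Z"
proof -
  define f where "f = (\<lambda>x. pair x (if the (\<sigma> x) then 1 else 0))"
  define S where "S = f ` dom \<sigma>"
  have SS: "{pair x (if b then 1 else 0) | x b. \<sigma> x = Some b} = S"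
  proof (intro equalityI subsetI)
    fix y assume "y \<in> {pair x (if b then 1 else 0) | x b. \<sigma> x = Some b}"
    then obtain x b where xb: "y = pair x (if b then 1 else 0)" "\<sigma> x = Some b" by blast
    then have "x \<in> dom \<sigma>" "y = f x" unfolding f_def by auto
    then show "y \<in> S" unfolding S_def by blast
  next
    fix y assume "y \<in> S"
    then obtain x where x: "x \<in> dom \<sigma>" "y = f x" unfolding S_def by blast
    then obtain b where b: "\<sigma> x = Some b" by blast
    then have "y = pair x (if b then 1 else 0)" using x unfolding f_def by simp
    then show "y \<in> {pair x (if b then 1 else 0) | x b. \<sigma> x = Some b}" using b by blast
  qed
  have finS: "finite S" using fin unfolding S_def by simp
  have c: "code_fin \<sigma> = set_encode S" unfolding code_fin_def SS by simp
  have mem: "j \<in> S \<longleftrightarrow> odd (code_fin \<sigma> div 2 ^ j)" for j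
  proof -
    have "set_decode (set_encode S) = S" using finS by simp
    then have "j \<in> S \<longleftrightarrow> j \<in> set_decode (set_encode S)" by simp
    then show ?thesis unfolding c set_decode_def by simp
  qed
  have "disc Z (code_fin \<sigma>) = 0 \<longleftrightarrow> (\<forall>j<code_fin \<sigma>. bad Z (code_fin \<sigma>) j = 0)" by (rule disc_zero)
  also have "\<dots> \<longleftrightarrow> (\<forall>j\<in>S. p2 j = (if p1 j \<in> Z then 1 else 0))"
  proof
    assume a: "\<forall>j<code_fin \<sigma>. bad Z (code_fin \<sigma>) j = 0"
    show "\<forall>j\<in>S. p2 j = (if p1 j \<in> Z then 1 else 0)"
    proof
      fix j assume "j \<in> S"
      then have "odd (code_fin \<sigma> div 2 ^ j)" "j < code_fin \<sigma>"
        using mem set_decode_less set_encode_inverse[OF finS] c by auto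
      then show "p2 j = (if p1 j \<in> Z then 1 else 0)" using a unfolding bad_def
        by (auto simp: odd_iff_mod_2_eq_one split: if_splits)
    qed
  next
    assume a: "\<forall>j\<in>S. p2 j = (if p1 j \<in> Z then 1 else 0)"
    show "\<forall>j<code_fin \<sigma>. bad Z (code_fin \<sigma>) j = 0"
    proof (intro allI impI)
      fix j assume "j < code_fin \<sigma>"
      show "bad Z (code_fin \<sigma>) j = 0"
      proof (cases "j \<in> S")
        case True then show ?thesis using a unfolding bad_def by simp
      next
        case False then have "even (code_fin \<sigma> div 2 ^ j)" using mem by blast
        then show ?thesis unfolding bad_def by (simp add: even_iff_mod_2_eq_zero)
      qed
    qed
  qed
  also have "\<dots> \<longleftrightarrow> (\<forall>x\<in>dom \<sigma>. (if the (\<sigma> x) then 1 else 0) = (if x \<in> Z then 1 else (0::nat)))"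
    unfolding S_def f_def by simp
  also have "\<dots> \<longleftrightarrow> agrees \<sigma> Z"
    unfolding agrees_def
  proof (intro ball_cong refl)
    fix x assume "x \<in> dom \<sigma>"
    then obtain b where "\<sigma> x = Some b" by blast
    then show "((if the (\<sigma> x) then 1 else 0) = (if x \<in> Z then 1 else (0::nat))) = (\<sigma> x = Some (x \<in> Z))"
      by simp
  qed
  finally show ?thesis .
qed



lemma axiom_props: assumes "is_axiom (l, \<sigma>, y)"
  shows "finite (dom \<sigma>)" "\<forall>x\<in>dom \<sigma>. p1 x < l" "l \<le> p1 y"
proof -
  have a: "finite (dom \<sigma>)" "\<forall>x\<in>dom \<sigma>. \<exists>m z. m < l \<and> x = pair m z" "\<exists>m z. m \<ge> l \<and> y = pair m z"
    using assms unfolding is_axiom_def by simp_all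
  show "finite (dom \<sigma>)" by (rule a(1))
  show "\<forall>x\<in>dom \<sigma>. p1 x < l"
  proof
    fix x assume "x \<in> dom \<sigma>"
    then obtain m z where "m < l" "x = pair m z" using a(2) by blast
    then show "p1 x < l" by simp
  qed
  obtain m z where "m \<ge> l" "y = pair m z" using a(3) by blast
  then show "l \<le> p1 y" by simp
qed

lemma agrees_local: "(\<forall>x. p1 x < m \<longrightarrow> (x \<in> C1 \<longleftrightarrow> x \<in> C2)) \<Longrightarrow> (\<forall>x\<in>dom \<sigma>. p1 x < m)
   \<Longrightarrow> agrees \<sigma> C1 \<longleftrightarrow> agrees \<sigma> C2"
  unfolding agrees_def by auto

lemma local_axiom: assumes ax: "\<forall>a\<in>A. is_axiom a" and a: "(l, \<sigma>, y) \<in> A"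
  and agr: "\<forall>x. p1 x < p1 y \<longrightarrow> (x \<in> C1 \<longleftrightarrow> x \<in> C2)"
  shows "agrees \<sigma> C1 \<longleftrightarrow> agrees \<sigma> C2"
proof -
  have "is_axiom (l, \<sigma>, y)" using ax a by blast
  then have "\<forall>x\<in>dom \<sigma>. p1 x < l" "l \<le> p1 y" by (rule axiom_props(2), rule axiom_props(3))
  then have "\<forall>x\<in>dom \<sigma>. p1 x < p1 y" using less_le_trans by blast
  then show ?thesis using agrees_local[OF agr] by blast
qed

lemma gen_unique: assumes ax: "\<forall>a\<in>A. is_axiom a"
  and g1: "generated_by A C1" and g2: "generated_by A C2"
  shows "C1 = C2"
proof -
  have "\<forall>x. p1 x < m \<longrightarrow> (x \<in> C1 \<longleftrightarrow> x \<in> C2)" for m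
  proof (induction m)
    case 0 then show ?case by simp
  next
    case (Suc m)
    show ?case
    proof (intro allI impI)
      fix x assume "p1 x < Suc m"
      then have lt: "\<forall>z. p1 z < p1 x \<longrightarrow> (z \<in> C1 \<longleftrightarrow> z \<in> C2)" using Suc.IH by auto
      have "x \<in> C1 \<longleftrightarrow> (\<exists>l \<sigma>. (l, \<sigma>, x) \<in> A \<and> agrees \<sigma> C1)" using g1 unfolding generated_by_def by blast
      also have "\<dots> \<longleftrightarrow> (\<exists>l \<sigma>. (l, \<sigma>, x) \<in> A \<and> agrees \<sigma> C2)"
        using local_axiom[OF ax _ lt] by blast
      also have "\<dots> \<longleftrightarrow> x \<in> C2" using g2 unfolding generated_by_def by blast
      finally show "x \<in> C1 \<longleftrightarrow> x \<in> C2" .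
    qed
  qed
  note all = this
  show ?thesis
  proof (rule set_eqI)
    fix x show "x \<in> C1 \<longleftrightarrow> x \<in> C2" using all[of "Suc (p1 x)"] by simp
  qed
qed

primrec Pre :: "(nat \<times> (nat \<rightharpoonup> bool) \<times> nat) set \<Rightarrow> nat \<Rightarrow> nat set" where
  "Pre A 0 = {}"
| "Pre A (Suc n) = Pre A n \<union> {y. p1 y = n \<and> (\<exists>l \<sigma>. (l, \<sigma>, y) \<in> A \<and> agrees \<sigma> (Pre A n))}"

lemma Pre_lt: "y \<in> Pre A n \<Longrightarrow> p1 y < n"
  by (induction n) auto

lemma Pre_stable: "p1 y < n \<Longrightarrow> y \<in> Pre A n \<longleftrightarrow> y \<in> Pre A (Suc (p1 y))"
proof (induction n)
  case 0 then show ?case by simp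
next
  case (Suc n)
  show ?case
  proof (cases "p1 y < n")
    case True
    then have "y \<in> Pre A (Suc n) \<longleftrightarrow> y \<in> Pre A n" by auto
    then show ?thesis using Suc.IH True by simp
  next
    case False then have "p1 y = n" using Suc.prems by simp
    then show ?thesis by simp
  qed
qed

lemma gen_exists: assumes ax: "\<forall>a\<in>A. is_axiom a"
  shows "generated_by A {y. y \<in> Pre A (Suc (p1 y))}"
  unfolding generated_by_def
proof
  fix y
  let ?C = "{y. y \<in> Pre A (Suc (p1 y))}"
  let ?m = "p1 y"
  have loc: "\<forall>x. p1 x < ?m \<longrightarrow> (x \<in> Pre A ?m \<longleftrightarrow> x \<in> ?C)" using Pre_stable by auto
  have "y \<notin> Pre A ?m" using Pre_lt by blast
  then have "y \<in> ?C \<longleftrightarrow> (\<exists>l \<sigma>. (l, \<sigma>, y) \<in> A \<and> agrees \<sigma> (Pre A ?m))" by simp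
  also have "\<dots> \<longleftrightarrow> (\<exists>l \<sigma>. (l, \<sigma>, y) \<in> A \<and> agrees \<sigma> ?C)"
    using local_axiom[OF ax _ loc] by blast
  finally show "y \<in> ?C \<longleftrightarrow> (\<exists>l \<sigma>. (l, \<sigma>, y) \<in> A \<and> agrees \<sigma> ?C)" .
qed

lemma ce_prog: assumes "ce X" shows "\<exists>P. X = {y. \<exists>v. eval {} P y v}"
proof -
  obtain e where e: "X = W e {}" using assms unfolding ce_def by blast
  show ?thesis
  proof (cases "\<exists>p. code p = e")
    case True
    then obtain P where P: "code P = e" by blast
    have "X = {y. \<exists>v. eval {} P y v}" unfolding e W_def using P code_inj by blast
    then show ?thesis by blast
  next
    case False
    then have "X = {}" unfolding e W_def by blast
    moreover have "\<not> eval {} (Mu (KON 1)) y v" for y v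
      using comp_Mu_dom[OF comp_KON[of "{}" 1], of y] by auto
    ultimately have "X = {y. \<exists>v. eval {} (Mu (KON 1)) y v}" by blast
    then show ?thesis by blast
  qed
qed

theorem lemma2p2:
  fixes A :: "(nat \<times> (nat \<rightharpoonup> bool) \<times> nat) set"
  assumes "\<forall>a\<in>A. is_axiom a"
    and "ce (code_axiom ` A)"
  shows "(\<exists>!C. generated_by A C) \<and> (\<forall>C. generated_by A C \<longrightarrow> REA_omega C)"
proof
  show "\<exists>!C. generated_by A C" using gen_exists[OF assms(1)] gen_unique[OF assms(1)] by blast
next
  obtain P where P: "code_axiom ` A = {y. \<exists>v. eval {} P y v}" using ce_prog[OF assms(2)] by blast
  show "\<forall>C. generated_by A C \<longrightarrow> REA_omega C"
  proof (intro allI impI)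
    fix C assume gC: "generated_by A C"
    have "column C n = W (code (pn P n)) (below_cols C n)" for n
    proof -
      let ?Z = "below_cols C n"
      have Z: "x \<in> ?Z \<longleftrightarrow> x \<in> C \<and> p1 x < n" for x
      proof
        assume "x \<in> ?Z"
        then obtain m y where "x \<in> C" "m < n" "x = pair m y" unfolding below_cols_def by blast
        then show "x \<in> C \<and> p1 x < n" by simp
      next
        assume a: "x \<in> C \<and> p1 x < n"
        then have "x = pair (p1 x) (p2 x)" by (simp add: pair_surj)
        then show "x \<in> ?Z" unfolding below_cols_def using a by blast
      qed
      have "z \<in> W (code (pn P n)) ?Z \<longleftrightarrow> z \<in> column C n" for z
      proof -
        have "z \<in> W (code (pn P n)) ?Z \<longleftrightarrow> (\<exists>v. eval ?Z (pn P n) z v)"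
          unfolding W_def using code_inj by blast
        also have "\<dots> \<longleftrightarrow> (\<exists>v. eval ?Z (Mu (TP P)) (pair n z) v)" by (rule pn_dom)
        also have "\<dots> \<longleftrightarrow> (\<exists>x s. sim P x s \<noteq> 0 \<and> p2 (p2 x) = pair n z \<and> disc ?Z (p1 (p2 x)) = 0)"
          by (rule mu_dom)
        also have "\<dots> \<longleftrightarrow> (\<exists>x. x \<in> code_axiom ` A \<and> p2 (p2 x) = pair n z \<and> disc ?Z (p1 (p2 x)) = 0)"
          unfolding P using sim_iff by blast
        also have "\<dots> \<longleftrightarrow> (\<exists>l \<sigma>. (l, \<sigma>, pair n z) \<in> A \<and> disc ?Z (code_fin \<sigma>) = 0)"
        proof
          assume "\<exists>x. x \<in> code_axiom ` A \<and> p2 (p2 x) = pair n z \<and> disc ?Z (p1 (p2 x)) = 0"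
          then obtain a where a: "a \<in> A" "p2 (p2 (code_axiom a)) = pair n z" "disc ?Z (p1 (p2 (code_axiom a))) = 0"
            by blast
          obtain l \<sigma> y where "a = (l, \<sigma>, y)" by (cases a) blast
          then show "\<exists>l \<sigma>. (l, \<sigma>, pair n z) \<in> A \<and> disc ?Z (code_fin \<sigma>) = 0"
            using a by (auto simp: code_axiom_def)
        next
          assume "\<exists>l \<sigma>. (l, \<sigma>, pair n z) \<in> A \<and> disc ?Z (code_fin \<sigma>) = 0"
          then obtain l \<sigma> where a: "(l, \<sigma>, pair n z) \<in> A" "disc ?Z (code_fin \<sigma>) = 0" by blast
          show "\<exists>x. x \<in> code_axiom ` A \<and> p2 (p2 x) = pair n z \<and> disc ?Z (p1 (p2 x)) = 0"
          proof (rule exI[of _ "code_axiom (l, \<sigma>, pair n z)"], intro conjI)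
            show "code_axiom (l, \<sigma>, pair n z) \<in> code_axiom ` A" using a(1) by (rule imageI)
          qed (simp_all add: a code_axiom_def)
        qed
        also have "\<dots> \<longleftrightarrow> (\<exists>l \<sigma>. (l, \<sigma>, pair n z) \<in> A \<and> agrees \<sigma> C)"
        proof -
          have "(l, \<sigma>, pair n z) \<in> A \<Longrightarrow> disc ?Z (code_fin \<sigma>) = 0 \<longleftrightarrow> agrees \<sigma> C" for l \<sigma>
          proof -
            assume a: "(l, \<sigma>, pair n z) \<in> A"
            have ia: "is_axiom (l, \<sigma>, pair n z)" using assms(1) a by blast
            have "disc ?Z (code_fin \<sigma>) = 0 \<longleftrightarrow> agrees \<sigma> ?Z" by (rule disc_agrees[OF axiom_props(1)[OF ia]])
            also have "\<dots> \<longleftrightarrow> agrees \<sigma> C"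
              by (rule local_axiom[OF assms(1) a]) (simp add: Z)
            finally show ?thesis .
          qed
          then show ?thesis by blast
        qed
        also have "\<dots> \<longleftrightarrow> pair n z \<in> C" using gC unfolding generated_by_def by blast
        also have "\<dots> \<longleftrightarrow> z \<in> column C n" unfolding column_def by simp
        finally show ?thesis .
      qed
      then show ?thesis by blast
    qed
    then show "REA_omega C" unfolding REA_omega_def using pn_computable by blast
  qed
qed

end
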